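(* For any context $\Gamma$ and formula $A$, there is at most one focused derivation of the sequent $\Gamma\vdash A$.
   Context: Formulas are built from atoms ($p,q,\dots$) by a binary product: every formula is an atom or $A\bullet B$. A context is a finite (possibly empty) list of formulas; commas denote concatenation. A derivation is a finite rooted tree whose nodes are labelled by rule instances and whose edges are labelled by sequents $\Gamma\vdash A$. A context is irreducible if its leftmost formula is not a product (it is empty or begins with an atom). A focused derivation is a derivation with no undischarged premises using only the rules: ($\bullet L$): from $A,B,\Delta\vdash C$ infer $A\bullet B,\Delta\vdash C$; ($\bullet R^{foc}$): from $\Gamma\vdash A$ and $\Delta\vdash B$ infer $\Gamma,\Delta\vdash A\bullet B$, where $\Gamma$ is irreducible; and ($id^{atm}$): $p\vdash p$ for atoms $p$. *)

theory Defs
  imports Main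
begin

datatype 'a fm = Atom 'a | Prod "'a fm" "'a fm"

type_synonym 'a ctx = "'a fm list"

definition irreducible_ctx :: "'a ctx \<Rightarrow> bool" where
  "irreducible_ctx G \<longleftrightarrow> G = [] \<or> (\<exists>p. hd G = Atom p)"

datatype rule_name = ProdL | ProdRfoc | IdAtm

text \<open>A derivation: a finite rooted tree whose nodes are labelled by a rule name and
the sequent concluded at that node (the label of the edge below the node);
the children are the subderivations of the premises, in order.\<close>
datatype 'a deriv = Node rule_name "'a ctx" "'a fm" "'a deriv list"

fun concl :: "'a deriv \<Rightarrow> 'a ctx \<times> 'a fm" where
  "concl (Node r G C ds) = (G, C)"

inductive focused :: "'a deriv \<Rightarrow> bool" where
  prodL: "\<lbrakk> focused d; concl d = (A # B # D, C) \<rbrakk>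
          \<Longrightarrow> focused (Node ProdL (Prod A B # D) C [d])"
| prodRfoc: "\<lbrakk> focused d1; focused d2; concl d1 = (G, A); concl d2 = (D, B);
               irreducible_ctx G \<rbrakk>
          \<Longrightarrow> focused (Node ProdRfoc (G @ D) (Prod A B) [d1, d2])"
| idAtm: "focused (Node IdAtm [Atom p] (Atom p) [])"

end

theory Submission
  imports Defs
begin
fun lvs :: "'a fm \<Rightarrow> 'a list" where
  "lvs (Atom p) = [p]"
| "lvs (Prod A B) = lvs A @ lvs B"
lemma lvs_ne: "lvs A \<noteq> []"
  by (induction A) simp_all
lemma focused_lvs': "focused d \<Longrightarrow> concat (map lvs (fst (concl d))) = lvs (snd (concl d))"
  by (induction d rule: focused.induct) simp_all
lemma focused_lvs: "focused d \<Longrightarrow> concl d = (G, A) \<Longrightarrow> concat (map lvs G) = lvs A"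
  using focused_lvs'[of d] by simp
lemma focused_ne: "focused d \<Longrightarrow> concl d = (G, A) \<Longrightarrow> G \<noteq> []"
proof
  assume "focused d" "concl d = (G, A)" "G = []"
  then have "lvs A = []" using focused_lvs[of d G A] by simp
  then show False using lvs_ne by blast
qed
lemma concat_nil: "concat (map lvs X) = [] \<Longrightarrow> X = []"
  using lvs_ne by (cases X) auto

lemma split_eq:
  assumes "focused a" "concl a = (G1, A)" "focused b" "concl b = (G2, A)"
    and "G1 @ D1 = G2 @ D2"
  shows "G1 = G2"
proof -
  have l1: "concat (map lvs G1) = lvs A" using focused_lvs assms(1,2) .
  have l2: "concat (map lvs G2) = lvs A" using focused_lvs assms(3,4) .
  from assms(5) obtain X where "G1 = G2 @ X \<or> G2 = G1 @ X"
    unfolding append_eq_append_conv2 by blast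
  then show ?thesis
  proof
    assume h: "G1 = G2 @ X"
    then have "concat (map lvs X) = []" using l1 l2 by simp
    then show ?thesis using h concat_nil by simp
  next
    assume h: "G2 = G1 @ X"
    then have "concat (map lvs X) = []" using l1 l2 by simp
    then show ?thesis using h concat_nil by simp
  qed
qed

lemma head_atom:
  assumes "focused d" "concl d = (Prod A B # D, C)"
  shows "\<exists>d'. d = Node ProdL (Prod A B # D) C [d']"
  using assms(1)
proof cases
  case (prodL d' A1 B1 D1 C1)
  then show ?thesis using assms(2) by simp
next
  case (prodRfoc d1 d2 G A' D' B')
  then have "G \<noteq> []" using focused_ne by blast
  then obtain x ys where g: "G = x # ys" by (cases G) auto
  with prodRfoc obtain p where "x = Atom p" by (auto simp: irreducible_ctx_def)
  with g prodRfoc assms(2) show ?thesis by simp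
next
  case (idAtm p)
  then show ?thesis using assms(2) by simp
qed

theorem lemma1p18:
  fixes G :: "'a ctx" and A :: "'a fm" and d1 d2 :: "'a deriv"
  assumes "focused d1" and "concl d1 = (G, A)"
      and "focused d2" and "concl d2 = (G, A)"
  shows "d1 = d2"
  using assms
proof (induction d1 arbitrary: G A d2 rule: focused.induct)
  case (prodL d A' B D C)
  have g: "G = Prod A' B # D" "A = C" using prodL.prems(1) by simp_all
  obtain d' where d2: "d2 = Node ProdL (Prod A' B # D) C [d']"
    using head_atom[OF prodL.prems(2)] prodL.prems(3) g by blast
  from prodL.prems(2) have "focused d'" "concl d' = (A' # B # D, C)"
    unfolding d2 by (cases rule: focused.cases; simp)+
  then have "d = d'" using prodL.IH prodL.hyps(2) by blast
  then show ?case using d2 by simp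
next
  case (prodRfoc e1 e2 G1 A1 D1 B1)
  have gg: "G = G1 @ D1" "A = Prod A1 B1" using prodRfoc.prems(1) by simp_all
  from prodRfoc.prems(2)
  show ?case
  proof (cases rule: focused.cases)
    case (prodL d A' B D C)
    obtain x ys where g: "G1 = x # ys" using focused_ne[OF prodRfoc.hyps(1,3)] by (cases G1) auto
    then obtain p where "x = Atom p" using prodRfoc.hyps(5) by (auto simp: irreducible_ctx_def)
    then show ?thesis using prodL prodRfoc.prems(3) gg g by simp
  next
    case (prodRfoc f1 f2 G2 A2 D2 B2)
    have eqs: "G1 @ D1 = G2 @ D2" "A1 = A2" "B1 = B2"
      using prodRfoc(1,4,5) prodRfoc.prems(3) gg by simp_all
    have "G1 = G2" using split_eq[of e1 G1 A1 f1 G2 D1 D2] prodRfoc.hyps(1,3) prodRfoc(2,4) eqs by simp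
    then have "D1 = D2" using eqs by simp
    have "e1 = f1" using prodRfoc.IH(1)[of G1 A1 f1] prodRfoc.hyps(3) prodRfoc(2) prodRfoc(4) eqs \<open>G1 = G2\<close> by simp
    moreover have "e2 = f2" using prodRfoc.IH(2)[of D1 B1 f2] prodRfoc.hyps(4) prodRfoc(3) prodRfoc(5) eqs \<open>D1 = D2\<close> by simp
    ultimately show ?thesis using prodRfoc(1) \<open>G1 = G2\<close> \<open>D1 = D2\<close> eqs by simp
  next
    case (idAtm p)
    then show ?thesis using prodRfoc.prems(3) gg by simp
  qed
next
  case (idAtm p)
  from idAtm.prems(2) show ?case
  proof (cases rule: focused.cases)
    case (prodL d A' B D C)
    have "Prod A' B # D = [Atom p]" using prodL(1) idAtm.prems(1,3) by (metis concl.simps prod.inject)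
    then show ?thesis by simp
  next
    case (prodRfoc f1 f2 G2 A2 D2 B2)
    have "Prod A2 B2 = Atom p" using prodRfoc(1) idAtm.prems(1,3) by (metis concl.simps prod.inject)
    then show ?thesis by simp
  next
    case (idAtm q)
    then show ?thesis using idAtm.prems(1,3) by simp
  qed
qed

end
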